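(* In the lamination game described in the context, suppose the allocation $\alpha$ is locally free, i.e. almost surely $\alpha$ does not assign two consecutive slots $k-1,k$ to the same player (equivalently $b_{i,k}=0$ whenever $a_{i,k}>0$). Then player $i$'s unique dominant strategy is passthrough pricing, i.e. choosing a target depth $s_i$ whose marginal price equals the reference price: $\phi(s_i)=p_{\mathcal{O}}$.
   Context: A market is given by a price density function $\phi:U\to\mathbb{R}$ on an open set $U\subseteq(0,\infty)$, monotone decreasing (continuously differentiable); its argument is the liquidity depth. Fix a reference depth $x_{\mathcal{O}}>0$ and write $p_{\mathcal{O}}=\phi(x_{\mathcal{O}})$. The opportunity cost function is $C(x)=p_{\mathcal{O}}(x-x_{\mathcal{O}})+\int_x^{x_{\mathcal{O}}}\phi(u)\,du$. The game has $N$ players, $K$ liquidity orders of signed sizes $r_1,\dots,r_K$, an allocation $\alpha:\{0,\dots,K\}\to\{1,\dots,N\}$, and an initial depth $x_0>0$, where $x_0,(r_k),\alpha$ are random. Each player $i$ chooses a target depth $s_i\in A\subset(0,\infty)$. Conventions: $r_0=0$, $\alpha(-1)=0$, $s_0=x_0$. Utility: $U_i(\vec s)=\sum_{j:\alpha(j)=i}[C(s_{\alpha(j-1)}+r_j)-C(s_i)]$, and players maximize expected utility; $|C(s+r)|$ is assumed bounded by an integrable function. Primary weights $a_{i,k}=\mathbb{P}[\alpha(k)=i]$, secondary weights $b_{i,k}=\mathbb{P}[\alpha(k-1)=i\mid\alpha(k)=i]$. *)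

theory Defs
  imports "HOL-Probability.Probability"
begin

text \<open>Opportunity cost
  C(x) = p_O (x - x_O) + int_x^{x_O} phi(u) du,
with the oriented integral int_x^{x_O} = - int_{x_O}^x when x > x_O, and p_O = phi x_O.\<close>
definition opp_cost :: "(real \<Rightarrow> real) \<Rightarrow> real \<Rightarrow> real \<Rightarrow> real" where
  "opp_cost \<phi> xO x =
     \<phi> xO * (x - xO) +
     (if x \<le> xO then integral {x..xO} \<phi> else - integral {xO..x} \<phi>)"

text \<open>Realised utility of player i under the profile s (s j = target depth of player j, j = 1..N),
  for a fixed realisation: allocation al :: slot => player (slots 0..K), order sizes r,
  initial depth x0.  Conventions: r_0 = 0, al(-1) = 0, s_0 = x0.\<close>
definition game_utility ::
  "(real \<Rightarrow> real) \<Rightarrow> real \<Rightarrow> nat \<Rightarrow> (nat \<Rightarrow> nat) \<Rightarrow> (nat \<Rightarrow> real) \<Rightarrow> real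
     \<Rightarrow> nat \<Rightarrow> (nat \<Rightarrow> real) \<Rightarrow> real" where
  "game_utility \<phi> xO K al r x0 i s =
     (\<Sum>j\<in>{j. j \<le> K \<and> al j = i}.
        opp_cost \<phi> xO
          ((let p = (if j = 0 then 0 else al (j - 1)) in if p = 0 then x0 else s p)
           + (if j = 0 then 0 else r j))
        - opp_cost \<phi> xO (s i))"

definition expected_utility ::
  "'w measure \<Rightarrow> (real \<Rightarrow> real) \<Rightarrow> real \<Rightarrow> nat \<Rightarrow> ('w \<Rightarrow> nat \<Rightarrow> nat) \<Rightarrow> ('w \<Rightarrow> nat \<Rightarrow> real)
     \<Rightarrow> ('w \<Rightarrow> real) \<Rightarrow> nat \<Rightarrow> (nat \<Rightarrow> real) \<Rightarrow> real" where
  "expected_utility M \<phi> xO K \<alpha> r x0 i s =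
     (\<integral>\<omega>. game_utility \<phi> xO K (\<alpha> \<omega>) (r \<omega>) (x0 \<omega>) i s \<partial>M)"

definition dominant_strategy ::
  "'w measure \<Rightarrow> (real \<Rightarrow> real) \<Rightarrow> real \<Rightarrow> nat \<Rightarrow> ('w \<Rightarrow> nat \<Rightarrow> nat) \<Rightarrow> ('w \<Rightarrow> nat \<Rightarrow> real)
     \<Rightarrow> ('w \<Rightarrow> real) \<Rightarrow> nat \<Rightarrow> real set \<Rightarrow> nat \<Rightarrow> real \<Rightarrow> bool" where
  "dominant_strategy M \<phi> xO K \<alpha> r x0 N A i si \<longleftrightarrow>
     si \<in> A \<and>
     (\<forall>s. (\<forall>j\<in>{1..N}. s j \<in> A) \<longrightarrow> (\<forall>t\<in>A.
        expected_utility M \<phi> xO K \<alpha> r x0 i (s(i := t))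
          \<le> expected_utility M \<phi> xO K \<alpha> r x0 i (s(i := si))))"

end

theory Submission imports Defs begin

lemma opp_cost_le:
  fixes \<phi> :: "real \<Rightarrow> real"
  assumes "x \<le> xO" "\<phi> integrable_on {x..xO}"
  shows "opp_cost \<phi> xO x = integral {x..xO} (\<lambda>u. \<phi> u - \<phi> xO)"
proof -
  have "integral {x..xO} (\<lambda>u. \<phi> u - \<phi> xO) = integral {x..xO} \<phi> - integral {x..xO} (\<lambda>u. \<phi> xO)"
    by (rule Henstock_Kurzweil_Integration.integral_diff[OF assms(2) integrable_const_ivl])
  also have "integral {x..xO} (\<lambda>u. \<phi> xO) = (xO - x) * \<phi> xO"
    using assms(1) by simp
  finally show ?thesis using assms(1) unfolding opp_cost_def by (simp add: algebra_simps)
qed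

lemma opp_cost_gt:
  fixes \<phi> :: "real \<Rightarrow> real"
  assumes "\<not> x \<le> xO" "\<phi> integrable_on {xO..x}"
  shows "opp_cost \<phi> xO x = integral {xO..x} (\<lambda>u. \<phi> xO - \<phi> u)"
proof -
  have "integral {xO..x} (\<lambda>u. \<phi> xO - \<phi> u) = integral {xO..x} (\<lambda>u. \<phi> xO) - integral {xO..x} \<phi>"
    by (rule Henstock_Kurzweil_Integration.integral_diff[OF integrable_const_ivl assms(2)])
  also have "integral {xO..x} (\<lambda>u. \<phi> xO) = (x - xO) * \<phi> xO"
    using assms(1) by simp
  finally show ?thesis using assms(1) unfolding opp_cost_def by (simp add: algebra_simps)
qed

lemma int_zero_imp:
  fixes g :: "real \<Rightarrow> real"
  assumes "a < b" "continuous_on {a..b} g" "\<And>u. u \<in> {a..b} \<Longrightarrow> 0 \<le> g u"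
    "integral {a..b} g = 0" "x \<in> {a..b}"
  shows "g x = 0"
proof -
  have "g integrable_on {a..b}" using assms(2) integrable_continuous_interval by blast
  hence "(g has_integral 0) (cbox a b)" using assms(4) by (metis has_integral_integral cbox_interval)
  moreover have "continuous_on (cbox a b) g" using assms(2) by simp
  moreover have "\<And>u. u \<in> box a b \<Longrightarrow> 0 \<le> g u" using assms(3) by auto
  moreover have "box a b \<noteq> {}" using assms(1) by simp
  moreover have "x \<in> cbox a b" using assms(5) by simp
  ultimately show ?thesis using has_integral_0_cbox_imp_0 by blast
qed

lemma C_props:
  fixes \<phi> :: "real \<Rightarrow> real"
  assumes cont: "continuous_on U \<phi>"
    and mono: "\<forall>x\<in>U. \<forall>y\<in>U. x \<le> y \<longrightarrow> \<phi> y \<le> \<phi> x"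
    and xO: "xO \<in> U" and sub: "{min x xO..max x xO} \<subseteq> U"
  shows "0 \<le> opp_cost \<phi> xO x \<and> (opp_cost \<phi> xO x = 0 \<longleftrightarrow> \<phi> x = \<phi> xO)"
proof -
  have mo: "\<phi> v \<le> \<phi> u" if "u \<in> U" "v \<in> U" "u \<le> v" for u v
    using mono that by blast
  show ?thesis
  proof (cases "x \<le> xO")
  case True
  have sub': "{x..xO} \<subseteq> U" using sub True by simp
  have c: "continuous_on {x..xO} \<phi>" using continuous_on_subset[OF cont sub'] .
  hence ig: "\<phi> integrable_on {x..xO}" by (rule integrable_continuous_interval)
  have eq: "opp_cost \<phi> xO x = integral {x..xO} (\<lambda>u. \<phi> u - \<phi> xO)"
    by (rule opp_cost_le[OF True ig])
  have nn: "0 \<le> \<phi> u - \<phi> xO" if u: "u \<in> {x..xO}" for u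
  proof -
    have "u \<in> U" using u sub' by blast
    moreover have "u \<le> xO" using u by simp
    ultimately show ?thesis using mo[of u xO] xO by simp
  qed
  have ig2: "(\<lambda>u. \<phi> u - \<phi> xO) integrable_on {x..xO}"
    by (rule Henstock_Kurzweil_Integration.integrable_diff[OF ig integrable_const_ivl])
  have c2: "continuous_on {x..xO} (\<lambda>u. \<phi> u - \<phi> xO)" using c by (intro continuous_intros)
  show ?thesis
  proof (intro conjI iffI)
    show "0 \<le> opp_cost \<phi> xO x" unfolding eq using ig2 nn by (rule integral_nonneg)
  next
    assume z: "opp_cost \<phi> xO x = 0"
    show "\<phi> x = \<phi> xO"
    proof (cases "x = xO")
      case False
      hence lt: "x < xO" using True by simp
      have "\<phi> x - \<phi> xO = 0"
        using int_zero_imp[OF lt c2 nn z[unfolded eq], of x] lt by simp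
      thus ?thesis by simp
    qed simp
  next
    assume e: "\<phi> x = \<phi> xO"
    have z0: "\<phi> u - \<phi> xO = 0" if u: "u \<in> {x..xO}" for u
    proof -
      have uU: "u \<in> U" using u sub' by blast
      have "x \<in> {x..xO}" using True by simp
      hence xU: "x \<in> U" using sub' by blast
      have "\<phi> u \<le> \<phi> x" using mo[OF xU uU] u by simp
      moreover have "\<phi> xO \<le> \<phi> u" using mo[OF uU xO] u by simp
      ultimately show ?thesis using e by simp
    qed
    have "integral {x..xO} (\<lambda>u. \<phi> u - \<phi> xO) = integral {x..xO} (\<lambda>u. 0)"
      by (rule integral_cong) (rule z0)
    thus "opp_cost \<phi> xO x = 0" using eq by simp
  qed
next
  case False
  have sub': "{xO..x} \<subseteq> U" using sub False by simp
  have c: "continuous_on {xO..x} \<phi>" using continuous_on_subset[OF cont sub'] .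
  hence ig: "\<phi> integrable_on {xO..x}" by (rule integrable_continuous_interval)
  have eq: "opp_cost \<phi> xO x = integral {xO..x} (\<lambda>u. \<phi> xO - \<phi> u)"
    by (rule opp_cost_gt[OF False ig])
  have nn: "0 \<le> \<phi> xO - \<phi> u" if u: "u \<in> {xO..x}" for u
  proof -
    have "u \<in> U" using u sub' by blast
    moreover have "xO \<le> u" using u by simp
    ultimately show ?thesis using mo[of xO u] xO by simp
  qed
  have ig2: "(\<lambda>u. \<phi> xO - \<phi> u) integrable_on {xO..x}"
    by (rule Henstock_Kurzweil_Integration.integrable_diff[OF integrable_const_ivl ig])
  have c2: "continuous_on {xO..x} (\<lambda>u. \<phi> xO - \<phi> u)" using c by (intro continuous_intros)
  have lt: "xO < x" using False by simp
  show ?thesis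
  proof (intro conjI iffI)
    show "0 \<le> opp_cost \<phi> xO x" unfolding eq using ig2 nn by (rule integral_nonneg)
  next
    assume z: "opp_cost \<phi> xO x = 0"
    have "\<phi> xO - \<phi> x = 0"
      using int_zero_imp[OF lt c2 nn z[unfolded eq], of x] lt by simp
    thus "\<phi> x = \<phi> xO" by simp
  next
    assume e: "\<phi> x = \<phi> xO"
    have z0: "\<phi> xO - \<phi> u = 0" if u: "u \<in> {xO..x}" for u
    proof -
      have uU: "u \<in> U" using u sub' by blast
      have "x \<in> {xO..x}" using lt by simp
      hence xU: "x \<in> U" using sub' by blast
      have "\<phi> x \<le> \<phi> u" using mo[OF uU xU] u by simp
      moreover have "\<phi> u \<le> \<phi> xO" using mo[OF xO uU] u by simp
      ultimately show ?thesis using e by simp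
    qed
    have "integral {xO..x} (\<lambda>u. \<phi> xO - \<phi> u) = integral {xO..x} (\<lambda>u. 0)"
      by (rule integral_cong) (rule z0)
    thus "opp_cost \<phi> xO x = 0" using eq by simp
  qed
  qed
qed

lemma util_diff:
  assumes lf: "\<forall>k\<in>{1..K}. al (k - 1) \<noteq> al k"
  shows "game_utility \<phi> xO K al r x0 i (s(i := t)) - game_utility \<phi> xO K al r x0 i (s(i := si))
    = real (card {j. j \<le> K \<and> al j = i}) * (opp_cost \<phi> xO si - opp_cost \<phi> xO t)"
proof -
  let ?S = "{j. j \<le> K \<and> al j = i}"
  define P where "P j = (let p = (if j = 0 then 0 else al (j - 1)) in if p = 0 then x0 else s p) + (if j = 0 then 0 else r j)" for j
  have fin: "finite ?S" by simp
  have h: "\<And>u. game_utility \<phi> xO K al r x0 i (s(i := u)) = (\<Sum>j\<in>?S. opp_cost \<phi> xO (P j) - opp_cost \<phi> xO u)"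
  proof -
    fix u
    show "game_utility \<phi> xO K al r x0 i (s(i := u)) = (\<Sum>j\<in>?S. opp_cost \<phi> xO (P j) - opp_cost \<phi> xO u)"
      unfolding game_utility_def
    proof (intro sum.cong refl)
      fix j assume j: "j \<in> ?S"
      show "opp_cost \<phi> xO ((let p = if j = 0 then 0 else al (j - 1) in if p = 0 then x0 else (s(i := u)) p) + (if j = 0 then 0 else r j)) - opp_cost \<phi> xO ((s(i := u)) i)
        = opp_cost \<phi> xO (P j) - opp_cost \<phi> xO u"
      proof (cases "j = 0")
        case True thus ?thesis by (simp add: P_def)
      next
        case False
        hence "al (j - 1) \<noteq> i" using lf j by auto
        thus ?thesis using False by (simp add: P_def Let_def)
      qed
    qed
  qed
  show ?thesis unfolding h sum_subtractf[symmetric] by (simp add: algebra_simps)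
qed
theorem mainTheorem2:
  fixes M :: "'w measure" and \<phi> :: "real \<Rightarrow> real" and U A :: "real set"
    and xO :: real and N K i :: nat
    and \<alpha> :: "'w \<Rightarrow> nat \<Rightarrow> nat" and r :: "'w \<Rightarrow> nat \<Rightarrow> real" and x0 :: "'w \<Rightarrow> real"
    and si :: real
  assumes "prob_space M"
    and "open U" and "U \<subseteq> {0<..}"
    and "\<phi> C1_differentiable_on U"
    and "\<forall>x\<in>U. \<forall>y\<in>U. x \<le> y \<longrightarrow> \<phi> y \<le> \<phi> x"
    and "xO \<in> U"
    and "A \<subseteq> U" and "\<forall>s\<in>A. {min s xO..max s xO} \<subseteq> U"
    and "\<exists>s\<in>A. \<phi> s = \<phi> xO"
    and "\<forall>\<omega>\<in>space M. x0 \<omega> > 0"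
    and "\<forall>\<omega>\<in>space M. \<forall>k\<le>K. \<alpha> \<omega> k \<in> {1..N}"
    and "\<forall>k\<le>K. (\<lambda>\<omega>. \<alpha> \<omega> k) \<in> measurable M (count_space UNIV)"
    and "\<forall>s. (\<forall>j\<in>{1..N}. s j \<in> A) \<longrightarrow>
           integrable M (\<lambda>\<omega>. game_utility \<phi> xO K (\<alpha> \<omega>) (r \<omega>) (x0 \<omega>) i s)"
    and "AE \<omega> in M. \<forall>k\<in>{1..K}. \<alpha> \<omega> (k - 1) \<noteq> \<alpha> \<omega> k"
    and "i \<in> {1..N}"
    and "\<exists>k\<le>K. measure M {\<omega>\<in>space M. \<alpha> \<omega> k = i} > 0"
    and "si \<in> A"
  shows "dominant_strategy M \<phi> xO K \<alpha> r x0 N A i si \<longleftrightarrow> \<phi> si = \<phi> xO"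
proof -
  interpret prob_space M by (rule assms(1))
  have cont: "continuous_on U \<phi>" using assms(4) by (rule C1_differentiable_imp_continuous_on)
  have CP: "\<And>x. x \<in> A \<Longrightarrow> 0 \<le> opp_cost \<phi> xO x \<and> (opp_cost \<phi> xO x = 0 \<longleftrightarrow> \<phi> x = \<phi> xO)"
  proof -
    fix x assume xA: "x \<in> A"
    have sub: "{min x xO..max x xO} \<subseteq> U" using assms(8) xA by blast
    show "0 \<le> opp_cost \<phi> xO x \<and> (opp_cost \<phi> xO x = 0 \<longleftrightarrow> \<phi> x = \<phi> xO)"
      by (rule C_props[OF cont assms(5) assms(6) sub])
  qed
  define E where "E k = {\<omega>\<in>space M. \<alpha> \<omega> k = i}" for k
  define n where "n \<omega> = (\<Sum>k\<le>K. indicator (E k) \<omega> :: real)" for \<omega>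
  have Es: "E k \<in> sets M" if "k \<le> K" for k
  proof -
    have "(\<lambda>\<omega>. \<alpha> \<omega> k) -` {i} \<inter> space M \<in> sets M"
    proof -
      have "(\<lambda>\<omega>. \<alpha> \<omega> k) \<in> measurable M (count_space UNIV)" using assms(12) that by blast
      from measurable_sets[OF this, of "{i}"] show ?thesis by simp
    qed
    moreover have "(\<lambda>\<omega>. \<alpha> \<omega> k) -` {i} \<inter> space M = E k" unfolding E_def by auto
    ultimately show ?thesis by simp
  qed
  have Esub: "E k \<inter> space M = E k" for k by (auto simp: E_def)
  have ind: "\<And>k. k \<in> {..K} \<Longrightarrow> integrable M (indicator (E k) :: 'w \<Rightarrow> real)"
    by (rule integrable_real_indicator) (auto intro: Es simp: emeasure_finite less_top[symmetric])
  have nint: "integrable M n" unfolding n_def[abs_def] using ind by (rule Bochner_Integration.integrable_sum[where f="\<lambda>k. indicator (E k)"])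
  have nmeas: "n \<in> borel_measurable M" using nint by (rule borel_measurable_integrable)
  have "integral\<^sup>L M n = (\<Sum>k\<le>K. integral\<^sup>L M (indicator (E k) :: 'w \<Rightarrow> real))"
    unfolding n_def[abs_def] using ind by (rule Bochner_Integration.integral_sum[where f="\<lambda>k. indicator (E k)"])
  also have "\<dots> = (\<Sum>k\<le>K. measure M (E k))"
    by (intro sum.cong refl) (simp add: Esub)
  finally have nval: "integral\<^sup>L M n = (\<Sum>k\<le>K. measure M (E k))" .
  obtain k0 where k0: "k0 \<le> K" "measure M (E k0) > 0" using assms(16) unfolding E_def by blast
  have npos: "integral\<^sup>L M n > 0"
  proof -
    have "measure M (E k0) \<le> (\<Sum>k\<le>K. measure M (E k))"
      by (rule member_le_sum) (use k0 in auto)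
    thus ?thesis using nval k0 by simp
  qed
  have card_eq: "real (card {j. j \<le> K \<and> \<alpha> \<omega> j = i}) = n \<omega>" if "\<omega> \<in> space M" for \<omega>
  proof -
    have "n \<omega> = (\<Sum>k\<le>K. if \<alpha> \<omega> k = i then 1 else 0)"
      unfolding n_def E_def using that by (intro sum.cong) auto
    also have "\<dots> = real (card ({..K} \<inter> {k. \<alpha> \<omega> k = i}))"
      by (simp add: sum.If_cases)
    also have "{..K} \<inter> {k. \<alpha> \<omega> k = i} = {j. j \<le> K \<and> \<alpha> \<omega> j = i}" by auto
    finally show ?thesis by simp
  qed
  have diff: "expected_utility M \<phi> xO K \<alpha> r x0 i (s(i := t)) - expected_utility M \<phi> xO K \<alpha> r x0 i (s(i := si))
      = (opp_cost \<phi> xO si - opp_cost \<phi> xO t) * integral\<^sup>L M n"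
    if s: "\<forall>j\<in>{1..N}. s j \<in> A" and t: "t \<in> A" for s t
  proof -
    let ?G = "\<lambda>u \<omega>. game_utility \<phi> xO K (\<alpha> \<omega>) (r \<omega>) (x0 \<omega>) i (s(i := u))"
    have st: "\<forall>j\<in>{1..N}. (s(i := t)) j \<in> A" using s t by simp
    have ssi: "\<forall>j\<in>{1..N}. (s(i := si)) j \<in> A" using s assms(17) by simp
    have i1: "integrable M (?G t)" by (rule mp[OF spec[OF assms(13), of "s(i := t)"] st])
    have i2: "integrable M (?G si)" by (rule mp[OF spec[OF assms(13), of "s(i := si)"] ssi])
    have "expected_utility M \<phi> xO K \<alpha> r x0 i (s(i := t)) - expected_utility M \<phi> xO K \<alpha> r x0 i (s(i := si))
        = integral\<^sup>L M (\<lambda>\<omega>. ?G t \<omega> - ?G si \<omega>)"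
      unfolding expected_utility_def by (rule Bochner_Integration.integral_diff[OF i1 i2, symmetric])
    also have "\<dots> = integral\<^sup>L M (\<lambda>\<omega>. n \<omega> * (opp_cost \<phi> xO si - opp_cost \<phi> xO t))"
    proof (rule integral_cong_AE)
      show "(\<lambda>\<omega>. ?G t \<omega> - ?G si \<omega>) \<in> borel_measurable M"
        using i1 i2 by (intro borel_measurable_diff borel_measurable_integrable)
      show "(\<lambda>\<omega>. n \<omega> * (opp_cost \<phi> xO si - opp_cost \<phi> xO t)) \<in> borel_measurable M"
        using nmeas by (intro borel_measurable_times borel_measurable_const)
      show "AE \<omega> in M. ?G t \<omega> - ?G si \<omega> = n \<omega> * (opp_cost \<phi> xO si - opp_cost \<phi> xO t)"
        using assms(14) AE_space
      proof eventually_elim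
        case (elim \<omega>)
        hence lf: "\<forall>k\<in>{1..K}. \<alpha> \<omega> (k - 1) \<noteq> \<alpha> \<omega> k" and sp: "\<omega> \<in> space M" by auto
        show ?case using util_diff[OF lf] card_eq[OF sp] by simp
      qed
    qed
    also have "\<dots> = (opp_cost \<phi> xO si - opp_cost \<phi> xO t) * integral\<^sup>L M n"
      by (simp add: mult.commute)
    finally show ?thesis .
  qed
  show ?thesis
  proof
    assume d: "dominant_strategy M \<phi> xO K \<alpha> r x0 N A i si"
    obtain s1 where s1: "s1 \<in> A" "\<phi> s1 = \<phi> xO" using assms(9) by blast
    let ?s = "\<lambda>_::nat. si"
    have sA: "\<forall>j\<in>{1..N}. ?s j \<in> A" using assms(17) by simp
    have "expected_utility M \<phi> xO K \<alpha> r x0 i (?s(i := s1)) \<le> expected_utility M \<phi> xO K \<alpha> r x0 i (?s(i := si))"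
    proof -
      have all: "\<forall>s. (\<forall>j\<in>{1..N}. s j \<in> A) \<longrightarrow> (\<forall>t\<in>A.
        expected_utility M \<phi> xO K \<alpha> r x0 i (s(i := t))
          \<le> expected_utility M \<phi> xO K \<alpha> r x0 i (s(i := si)))"
        using d unfolding dominant_strategy_def by (rule conjunct2)
      show ?thesis by (rule all[rule_format, of ?s s1]) (use assms(17) s1(1) in auto)
    qed
    with diff[OF sA s1(1)] have "(opp_cost \<phi> xO si - opp_cost \<phi> xO s1) * integral\<^sup>L M n \<le> 0" by simp
    with npos have "opp_cost \<phi> xO si \<le> opp_cost \<phi> xO s1"
      by (simp add: mult_le_0_iff)
    moreover have "opp_cost \<phi> xO s1 = 0" using CP[OF s1(1)] s1(2) by simp
    ultimately have "opp_cost \<phi> xO si = 0" using CP[OF assms(17)] by simp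
    thus "\<phi> si = \<phi> xO" using CP[OF assms(17)] by simp
  next
    assume e: "\<phi> si = \<phi> xO"
    have z: "opp_cost \<phi> xO si = 0" using CP[OF assms(17)] e by simp
    show "dominant_strategy M \<phi> xO K \<alpha> r x0 N A i si"
      unfolding dominant_strategy_def
    proof (intro conjI allI impI ballI)
      show "si \<in> A" by (rule assms(17))
    next
      fix s t assume s: "\<forall>j\<in>{1..N}. s j \<in> A" and t: "t \<in> A"
      have "(opp_cost \<phi> xO si - opp_cost \<phi> xO t) * integral\<^sup>L M n \<le> 0"
        using z CP[OF t] npos by (simp add: mult_le_0_iff)
      with diff[OF s t] show "expected_utility M \<phi> xO K \<alpha> r x0 i (s(i := t)) \<le> expected_utility M \<phi> xO K \<alpha> r x0 i (s(i := si))"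
        by simp
    qed
  qed
qed

end
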